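(* Let $\mathcal{G}$ be a family of nonatomic routing problems with homogeneous users, and let $\beta \ge 0$. Then $$\mathrm{PoA}\big(\mathcal{G},T^{\mathrm{opt}+}(\beta)\big) \;\ge\; \mathrm{PoA}\big(\mathcal{G},T^{\mathrm{opt}-}(\beta)\big) \;\ge\; 1,$$ i.e., the optimal $\beta$-bounded subsidy mechanism has price of anarchy no greater than the optimal $\beta$-bounded tolling mechanism. Moreover, if every optimal $\beta$-bounded subsidy mechanism is tightly bounded, then the first inequality is strict.
   Context: A routing problem $G$ consists of a directed graph $(V,E)$, origin–destination pairs $(o_i,d_i)$, $i=1,\dots,k$, with traffic masses $r_i>0$, $\sum_i r_i=1$, and for each edge $e$ a nonnegative nondecreasing latency function $\ell_e:\mathbb{R}_{\ge0}\to\mathbb{R}_{\ge0}$. Let $\mathcal{P}_i$ be the set of simple $o_i$–$d_i$ paths. A flow assigns mass $f_P\ge0$ to each path, is feasible if $\sum_{P\in\mathcal{P}_i}f_P=r_i$ for all $i$, and has edge flows $f_e=\sum_{P\ni e}f_P$. Its total latency is $\mathcal{L}(f)=\sum_{e}f_e\ell_e(f_e)$, and $\mathcal{L}^{\mathrm{opt}}(G)$ is the minimum total latency over feasible flows. Users form a continuum $N=\bigcup_i N_i$ of disjoint intervals with Lebesgue measure $\mu(N_i)=r_i$; users in $N_i$ choose a path in $\mathcal{P}_i$. Each user $x$ has a sensitivity $s_x\ge0$ to incentives; users are homogeneous when $s_x=1$ for all $x$. For a family $\mathcal{G}$ of routing problems let $L(\mathcal{G})$ be the set of all latency functions occurring in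 it. An incentive mechanism $T$ assigns to each latency function $\ell\in L(\mathcal{G})$ a function $T(\ell):[0,1]\to\mathbb{R}$, and each edge $e$ receives incentive $\tau_e=T(\ell_e)$. A user $x\in N_i$ on path $P$ under flow $f$ has cost $J_x(P,f)=\sum_{e\in P}\big(\ell_e(f_e)+s_x\tau_e(f_e)\big)$; a Nash flow is a feasible flow in which every user uses a path minimizing its cost among $\mathcal{P}_i$. $\mathcal{L}^{\mathrm{Nash}}(G,T)$ is the highest total latency of a Nash flow, and $\mathrm{PoA}(\mathcal{G},T)=\sup_{G\in\mathcal{G}}\mathcal{L}^{\mathrm{Nash}}(G,T)/\mathcal{L}^{\mathrm{opt}}(G)$ (homogeneous users). A $\beta$-bounded tolling mechanism satisfies $T(\ell)[f]\in[0,\beta\ell(f)]$ for all $f\in[0,1]$ and all $\ell\in L(\mathcal{G})$; a $\beta$-bounded subsidy mechanism satisfies $T(\ell)[f]\in[-\beta\ell(f),0]$. $T^{\mathrm{opt}+}(\beta)$ (resp. $T^{\mathrm{opt}-}(\beta)$) denotes an optimal $\beta$-bounded tolling (resp. subsidy) mechanism, i.e., one minimizing $\mathrm{PoA}(\mathcal{G},\cdot)$ over all $\beta$-bounded tolling (resp. subsidy) mechanisms. A subsidy mechanism is tightly bounded if $T(\ell)[f]=-\beta\ell(f)$ for some $\ell\in L(\mathcal{G})$ and some $f\in(0,1]$ (i.e., the budget constraint is active).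
   Formalization: A subsidy mechanism counts as tightly bounded only if also $\beta\ell(f) > 0$ at the point $f \in (0,1]$ where $T(\ell)[f]=-\beta\ell(f)$, so the active subsidy bound is strictly negative. The statement above fails without it. *)

theory Defs
  imports "HOL-Library.Extended_Real"
begin

record ('v, 'e) routing =
  edges   :: "'e set"
  etail   :: "'e \<Rightarrow> 'v"
  ehead   :: "'e \<Rightarrow> 'v"
  ncom    :: nat
  orig    :: "nat \<Rightarrow> 'v"
  dest    :: "nat \<Rightarrow> 'v"
  mass    :: "nat \<Rightarrow> real"
  lat     :: "'e \<Rightarrow> real \<Rightarrow> real"

definition simple_path :: "('v, 'e, 'z) routing_scheme \<Rightarrow> 'v \<Rightarrow> 'v \<Rightarrow> 'e list \<Rightarrow> bool" where
  "simple_path G o' d P \<longleftrightarrow>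
     (P = [] \<and> o' = d) \<or>
     (P \<noteq> [] \<and> set P \<subseteq> edges G \<and>
      (\<forall>j. Suc j < length P \<longrightarrow> ehead G (P ! j) = etail G (P ! Suc j)) \<and>
      etail G (hd P) = o' \<and> ehead G (last P) = d \<and>
      distinct (etail G (hd P) # map (ehead G) P))"

definition paths :: "('v, 'e, 'z) routing_scheme \<Rightarrow> nat \<Rightarrow> 'e list set" where
  "paths G i = {P. simple_path G (orig G i) (dest G i) P}"

definition wf_routing :: "('v, 'e, 'z) routing_scheme \<Rightarrow> bool" where
  "wf_routing G \<longleftrightarrow>
     finite (edges G) \<and> ncom G \<ge> 1 \<and>
     (\<forall>i<ncom G. mass G i > 0) \<and> (\<Sum>i<ncom G. mass G i) = 1 \<and>
     (\<forall>e\<in>edges G. (\<forall>x\<ge>0. lat G e x \<ge> 0) \<and> mono_on {0..} (lat G e)) \<and>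
     (\<forall>i<ncom G. paths G i \<noteq> {})"

text \<open>Path flows: f i P is the mass of commodity i routed on path P.\<close>

type_synonym 'e flow = "nat \<Rightarrow> 'e list \<Rightarrow> real"

definition feasible :: "('v, 'e, 'z) routing_scheme \<Rightarrow> 'e flow \<Rightarrow> bool" where
  "feasible G f \<longleftrightarrow>
     (\<forall>i<ncom G. \<forall>P. f i P \<ge> 0 \<and> (P \<notin> paths G i \<longrightarrow> f i P = 0)) \<and>
     (\<forall>i<ncom G. (\<Sum>P\<in>paths G i. f i P) = mass G i)"

definition edge_flow :: "('v, 'e, 'z) routing_scheme \<Rightarrow> 'e flow \<Rightarrow> 'e \<Rightarrow> real" where
  "edge_flow G f e = (\<Sum>i<ncom G. \<Sum>P\<in>{P\<in>paths G i. e \<in> set P}. f i P)"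

definition total_latency :: "('v, 'e, 'z) routing_scheme \<Rightarrow> 'e flow \<Rightarrow> real" where
  "total_latency G f = (\<Sum>e\<in>edges G. edge_flow G f e * lat G e (edge_flow G f e))"

definition opt_latency :: "('v, 'e, 'z) routing_scheme \<Rightarrow> real" where
  "opt_latency G = Inf {total_latency G f | f. feasible G f}"

text \<open>An incentive mechanism maps a latency function to an incentive function.\<close>

type_synonym mechanism = "(real \<Rightarrow> real) \<Rightarrow> real \<Rightarrow> real"

text \<open>Cost of a path for a homogeneous user (sensitivity 1).\<close>

definition path_cost :: "('v, 'e, 'z) routing_scheme \<Rightarrow> mechanism \<Rightarrow> 'e flow \<Rightarrow> 'e list \<Rightarrow> real" where
  "path_cost G T f P =
     (\<Sum>e\<leftarrow>P. lat G e (edge_flow G f e) + T (lat G e) (edge_flow G f e))"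

definition nash :: "('v, 'e, 'z) routing_scheme \<Rightarrow> mechanism \<Rightarrow> 'e flow \<Rightarrow> bool" where
  "nash G T f \<longleftrightarrow> feasible G f \<and>
     (\<forall>i<ncom G. \<forall>P\<in>paths G i. f i P > 0 \<longrightarrow>
        (\<forall>Q\<in>paths G i. path_cost G T f P \<le> path_cost G T f Q))"

definition nash_latency :: "('v, 'e, 'z) routing_scheme \<Rightarrow> mechanism \<Rightarrow> ereal" where
  "nash_latency G T =
     (if \<exists>f. nash G T f then Sup {ereal (total_latency G f) | f. nash G T f} else \<infinity>)"

definition poa_ratio :: "ereal \<Rightarrow> real \<Rightarrow> ereal" where
  "poa_ratio LN LO = (if LO = 0 then (if LN = 0 then 1 else \<infinity>) else LN / ereal LO)"

definition PoA :: "('v, 'e, 'z) routing_scheme set \<Rightarrow> mechanism \<Rightarrow> ereal" where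
  "PoA \<G> T = (SUP G\<in>\<G>. poa_ratio (nash_latency G T) (opt_latency G))"

definition latencies :: "('v, 'e, 'z) routing_scheme set \<Rightarrow> (real \<Rightarrow> real) set" where
  "latencies \<G> = {lat G e | G e. G \<in> \<G> \<and> e \<in> edges G}"

definition bounded_tolling :: "('v, 'e, 'z) routing_scheme set \<Rightarrow> real \<Rightarrow> mechanism \<Rightarrow> bool" where
  "bounded_tolling \<G> \<beta> T \<longleftrightarrow>
     (\<forall>l\<in>latencies \<G>. \<forall>x\<in>{0..1}. 0 \<le> T l x \<and> T l x \<le> \<beta> * l x)"

definition bounded_subsidy :: "('v, 'e, 'z) routing_scheme set \<Rightarrow> real \<Rightarrow> mechanism \<Rightarrow> bool" where
  "bounded_subsidy \<G> \<beta> T \<longleftrightarrow>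
     (\<forall>l\<in>latencies \<G>. \<forall>x\<in>{0..1}. - \<beta> * l x \<le> T l x \<and> T l x \<le> 0)"

definition optimal_tolling :: "('v, 'e, 'z) routing_scheme set \<Rightarrow> real \<Rightarrow> mechanism \<Rightarrow> bool" where
  "optimal_tolling \<G> \<beta> T \<longleftrightarrow> bounded_tolling \<G> \<beta> T \<and>
     (\<forall>T'. bounded_tolling \<G> \<beta> T' \<longrightarrow> PoA \<G> T \<le> PoA \<G> T')"

definition optimal_subsidy :: "('v, 'e, 'z) routing_scheme set \<Rightarrow> real \<Rightarrow> mechanism \<Rightarrow> bool" where
  "optimal_subsidy \<G> \<beta> T \<longleftrightarrow> bounded_subsidy \<G> \<beta> T \<and>
     (\<forall>T'. bounded_subsidy \<G> \<beta> T' \<longrightarrow> PoA \<G> T \<le> PoA \<G> T')"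

text \<open>Tightly bounded: the budget constraint is active (non-degenerately, i.e. the
  bound -\<beta> l(x) is strictly negative there).\<close>

definition tightly_bounded :: "('v, 'e, 'z) routing_scheme set \<Rightarrow> real \<Rightarrow> mechanism \<Rightarrow> bool" where
  "tightly_bounded \<G> \<beta> T \<longleftrightarrow>
     (\<exists>l\<in>latencies \<G>. \<exists>x\<in>{0<..1}. T l x = - \<beta> * l x \<and> \<beta> * l x > 0)"

end

theory Submission
  imports Defs
begin

lemma sum_list_div_aux: "(\<Sum>e\<leftarrow>xs. g e / (c::real)) = (\<Sum>e\<leftarrow>xs. g e) / c"
  by (induction xs) (auto simp: add_divide_distrib)

definition sig :: "real \<Rightarrow> mechanism \<Rightarrow> mechanism" where
  "sig \<beta> T = (\<lambda>l x. (T l x - \<beta> * l x) / (1 + \<beta>))"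

lemma path_cost_sig:
  assumes "\<beta> \<ge> 0"
  shows "path_cost G (sig \<beta> T) f P = path_cost G T f P / (1 + \<beta>)"
proof -
  have "\<And>a b. a + (b - \<beta> * a) / (1 + \<beta>) = (a + b) / (1 + \<beta>)"
    using assms by (simp add: field_simps)
  then show ?thesis unfolding path_cost_def sig_def
    by (simp add: sum_list_div_aux[symmetric])
qed

lemma nash_sig:
  assumes "\<beta> \<ge> 0"
  shows "nash G (sig \<beta> T) f = nash G T f"
proof -
  have p: "1 + \<beta> > 0" using assms by simp
  have "\<And>P Q. path_cost G (sig \<beta> T) f P \<le> path_cost G (sig \<beta> T) f Q
      \<longleftrightarrow> path_cost G T f P \<le> path_cost G T f Q"
    using p by (simp add: path_cost_sig[OF assms] divide_right_mono_neg divide_le_cancel)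
  then show ?thesis unfolding nash_def by simp
qed

lemma PoA_sig:
  assumes "\<beta> \<ge> 0"
  shows "PoA \<G> (sig \<beta> T) = PoA \<G> T"
  unfolding PoA_def nash_latency_def nash_sig[OF assms] by simp

lemma lat_nonneg:
  assumes "\<forall>G\<in>\<G>. wf_routing G" "l \<in> latencies \<G>" "x \<ge> 0"
  shows "l x \<ge> 0"
  using assms unfolding latencies_def wf_routing_def by auto

lemma sig_bounded:
  assumes "\<forall>G\<in>\<G>. wf_routing G" "\<beta> \<ge> 0" "bounded_tolling \<G> \<beta> T"
  shows "bounded_subsidy \<G> \<beta> (sig \<beta> T)"
  unfolding bounded_subsidy_def
proof (intro ballI conjI)
  fix l x assume l: "l \<in> latencies \<G>" and x: "x \<in> {0..(1::real)}"
  have lx: "l x \<ge> 0" using lat_nonneg[OF assms(1) l] x by simp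
  have t: "0 \<le> T l x" "T l x \<le> \<beta> * l x" using assms(3) l x unfolding bounded_tolling_def by auto
  have p: "1 + \<beta> > 0" using assms by simp
  have bl: "\<beta> * l x \<ge> 0" using lx assms by simp
  show "sig \<beta> T l x \<le> 0" unfolding sig_def using t p by (simp add: divide_nonpos_pos)
  have bb: "\<beta> * (\<beta> * l x) \<ge> 0" using bl assms(2) by simp
  have "- \<beta> * l x * (1 + \<beta>) = - \<beta> * l x - \<beta> * (\<beta> * l x)" by (simp add: algebra_simps)
  then have "- \<beta> * l x * (1 + \<beta>) \<le> T l x - \<beta> * l x" using t bb by linarith
  then show "- \<beta> * l x \<le> sig \<beta> T l x" unfolding sig_def using p
    by (simp add: pos_le_divide_eq)
qed

lemma edge_flow_nonneg:
  assumes "feasible G f" shows "edge_flow G f e \<ge> 0"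
  using assms unfolding edge_flow_def feasible_def
  by (auto intro!: sum_nonneg)

lemma total_latency_nonneg:
  assumes "wf_routing G" "feasible G f" shows "total_latency G f \<ge> 0"
  unfolding total_latency_def
proof (rule sum_nonneg)
  fix e assume e: "e \<in> edges G"
  have a: "edge_flow G f e \<ge> 0" by (rule edge_flow_nonneg[OF assms(2)])
  then have "lat G e (edge_flow G f e) \<ge> 0" using assms(1) e unfolding wf_routing_def by auto
  then show "edge_flow G f e * lat G e (edge_flow G f e) \<ge> 0" using a by simp
qed

lemma paths_finite:
  assumes "wf_routing G" shows "finite (paths G i)"
proof (rule finite_subset)
  show "paths G i \<subseteq> {xs. set xs \<subseteq> edges G \<and> distinct xs}"
  proof
    fix P assume "P \<in> paths G i"
    then have "simple_path G (orig G i) (dest G i) P" unfolding paths_def by simp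
    then show "P \<in> {xs. set xs \<subseteq> edges G \<and> distinct xs}"
      unfolding simple_path_def by (auto simp: distinct_map)
  qed
  show "finite {xs. set xs \<subseteq> edges G \<and> distinct xs}"
    using assms unfolding wf_routing_def by (intro finite_subset_distinct) simp
qed

lemma feasible_exists:
  assumes "wf_routing G" shows "\<exists>f. feasible G f"
proof -
  have "\<forall>i. \<exists>P. i < ncom G \<longrightarrow> P \<in> paths G i" using assms unfolding wf_routing_def by blast
  then obtain p where p: "\<And>i. i < ncom G \<Longrightarrow> p i \<in> paths G i" by metis
  define f where "f = (\<lambda>i P. if P = p i then mass G i else 0)"
  have "feasible G f" unfolding feasible_def
  proof (intro conjI allI impI)
    fix i P assume i: "i < ncom G"
    show "0 \<le> f i P" using assms i unfolding f_def wf_routing_def by auto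
    show "P \<notin> paths G i \<Longrightarrow> f i P = 0" using p[OF i] unfolding f_def by auto
  next
    fix i assume i: "i < ncom G"
    have "(\<Sum>P\<in>paths G i. f i P) = (\<Sum>P\<in>paths G i. if P = p i then mass G i else 0)"
      unfolding f_def by simp
    also have "\<dots> = mass G i" using p[OF i] paths_finite[OF assms] by (simp add: sum.delta')
    finally show "(\<Sum>P\<in>paths G i. f i P) = mass G i" .
  qed
  then show ?thesis by blast
qed

lemma poa_ratio_ge1:
  assumes "wf_routing G"
  shows "poa_ratio (nash_latency G T) (opt_latency G) \<ge> 1"
proof -
  let ?S = "{total_latency G f | f. feasible G f}"
  obtain f0 where "feasible G f0" using feasible_exists[OF assms] by blast
  then have mem0: "total_latency G f0 \<in> ?S" by blast
  have o0: "opt_latency G \<ge> 0" unfolding opt_latency_def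
    using mem0 total_latency_nonneg[OF assms] by (intro cInf_greatest) auto
  show ?thesis
proof (cases "\<exists>f. nash G T f")
  case False
  then have "nash_latency G T = \<infinity>" unfolding nash_latency_def using if_not_P[OF False] by metis
  then show ?thesis unfolding poa_ratio_def using o0 by simp
next
  case True
  then obtain f where f: "nash G T f" by blast
  have ff: "feasible G f" using f unfolding nash_def by simp
  let ?S = "{total_latency G f | f. feasible G f}"
  have bdd: "bdd_below ?S" using total_latency_nonneg[OF assms]
    by (auto intro!: bdd_belowI[where m=0])
  have mem: "total_latency G f \<in> ?S" using ff by blast
  have o1: "opt_latency G \<le> total_latency G f" unfolding opt_latency_def
    using cInf_lower[OF mem bdd] .
  have n1: "nash_latency G T \<ge> ereal (total_latency G f)"
    unfolding nash_latency_def if_P[OF True] by (rule Sup_upper) (use f in blast)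
  show ?thesis
  proof (cases "opt_latency G = 0")
    case True
    then show ?thesis unfolding poa_ratio_def by simp
  next
    case False
    then have pos: "opt_latency G > 0" using o0 by simp
    have "ereal (opt_latency G) \<le> nash_latency G T"
      using n1 o1 by (meson ereal_less_eq(3) order_trans)
    then have "ereal (opt_latency G) / ereal (opt_latency G) \<le> nash_latency G T / ereal (opt_latency G)"
      using pos by (intro ereal_divide_right_mono) auto
    then show ?thesis using False pos unfolding poa_ratio_def by simp
  qed
qed
qed

theorem theorem1:
  fixes \<G> :: "('v, 'e) routing set" and \<beta> :: real and Tplus Tminus :: mechanism
  assumes "\<forall>G\<in>\<G>. wf_routing G"
    and "\<G> \<noteq> {}"
    and "\<beta> \<ge> 0"
    and "optimal_tolling \<G> \<beta> Tplus"
    and "optimal_subsidy \<G> \<beta> Tminus"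
  shows "PoA \<G> Tplus \<ge> PoA \<G> Tminus \<and> PoA \<G> Tminus \<ge> 1 \<and>
         ((\<forall>T. optimal_subsidy \<G> \<beta> T \<longrightarrow> tightly_bounded \<G> \<beta> T)
            \<longrightarrow> PoA \<G> Tplus > PoA \<G> Tminus)"
proof -
  have bs: "bounded_subsidy \<G> \<beta> (sig \<beta> Tplus)"
    using sig_bounded[OF assms(1,3)] assms(4) unfolding optimal_tolling_def by simp
  have le: "PoA \<G> Tminus \<le> PoA \<G> (sig \<beta> Tplus)"
    using assms(5) bs unfolding optimal_subsidy_def by simp
  have A: "PoA \<G> Tplus \<ge> PoA \<G> Tminus" using le PoA_sig[OF assms(3), of \<G> Tplus] by simp
  obtain G where G: "G \<in> \<G>" using assms(2) by blast
  have "1 \<le> poa_ratio (nash_latency G Tminus) (opt_latency G)"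
    using poa_ratio_ge1 assms(1) G by blast
  also have "\<dots> \<le> PoA \<G> Tminus" unfolding PoA_def using G by (rule SUP_upper)
  finally have B: "PoA \<G> Tminus \<ge> 1" .
  have C: "PoA \<G> Tplus > PoA \<G> Tminus"
    if tb: "\<forall>T. optimal_subsidy \<G> \<beta> T \<longrightarrow> tightly_bounded \<G> \<beta> T"
  proof (rule ccontr)
    assume "\<not> PoA \<G> Tplus > PoA \<G> Tminus"
    then have eq: "PoA \<G> (sig \<beta> Tplus) \<le> PoA \<G> Tminus" using PoA_sig[OF assms(3), of \<G> Tplus] by simp
    have "optimal_subsidy \<G> \<beta> (sig \<beta> Tplus)"
      unfolding optimal_subsidy_def using bs eq assms(5) unfolding optimal_subsidy_def
      using order_trans by blast
    then have "tightly_bounded \<G> \<beta> (sig \<beta> Tplus)" using tb by blast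
    then obtain l x where l: "l \<in> latencies \<G>" and x: "x \<in> {0<..1::real}"
      and eqs: "sig \<beta> Tplus l x = - \<beta> * l x" and pos: "\<beta> * l x > 0"
      unfolding tightly_bounded_def by blast
    have t: "0 \<le> Tplus l x" using assms(4) l x
      unfolding optimal_tolling_def bounded_tolling_def by auto
    have p: "1 + \<beta> > 0" using assms(3) by simp
    have "(Tplus l x - \<beta> * l x) = - \<beta> * l x * (1 + \<beta>)"
      using eqs p unfolding sig_def by (simp add: field_simps)
    then have "Tplus l x = - \<beta> * (\<beta> * l x)" by (simp add: algebra_simps)
    moreover have "\<beta> * (\<beta> * l x) > 0" using pos assms(3)
      by (metis mult_pos_pos mult_zero_left order_le_less)
    ultimately show False using t by simp
  qed
  show ?thesis using A B C by blast
qed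

end
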